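(* Let $V$ be a finite-dimensional vector space with a linear (rational) action of an algebraic group $G$. Then a closed subvariety $X\subset V$ is $G$-symmetric if and only if it is stable under $\operatorname{End}_G(V)$, i.e. $\phi(X)\subset X$ for all $\phi\in\operatorname{End}_G(V)$.
   Context: $\Bbbk$ is algebraically closed of characteristic $0$. Vector fields on $V$ are identified with polynomial maps $\xi\colon V\to V$ ($\xi(v)\in V=T_vV$); such $\xi$ is $G$-invariant if $\xi(gv)=g\xi(v)$ for all $g\in G$, $v\in V$. A closed subvariety $X\subset V$ is $G$-symmetric if $\xi(x)\in T_xX$ for all $x\in X$ and all $G$-invariant vector fields $\xi$ on $V$. $\operatorname{End}_G(V)$ is the set of $G$-equivariant polynomial maps $V\to V$. *)

theory Defs
  imports "HOL-Analysis.Analysis" "HOL-Computational_Algebra.Polynomial" "HOL-Algebra.Group"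
begin

text \<open>The vector space V is k^n (coordinates chosen), modelled as the type 'k ^ 'n
  for a finite index type 'n.  Polynomial functions on V are the functions generated
  by constants and coordinate functions under addition and multiplication.\<close>

inductive_set poly_fun :: "('k::comm_ring_1 ^ 'n::finite \<Rightarrow> 'k) set" where
  const: "(\<lambda>x. c) \<in> poly_fun"
| coord: "(\<lambda>x. x $ i) \<in> poly_fun"
| add: "f \<in> poly_fun \<Longrightarrow> g \<in> poly_fun \<Longrightarrow> (\<lambda>x. f x + g x) \<in> poly_fun"
| mult: "f \<in> poly_fun \<Longrightarrow> g \<in> poly_fun \<Longrightarrow> (\<lambda>x. f x * g x) \<in> poly_fun"

text \<open>Polynomial maps V \<rightarrow> V (= polynomial vector fields on V).\<close>
definition poly_map :: "('k::comm_ring_1 ^ 'n::finite \<Rightarrow> 'k ^ 'n) \<Rightarrow> bool" where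
  "poly_map \<phi> \<longleftrightarrow> (\<forall>i. (\<lambda>x. \<phi> x $ i) \<in> poly_fun)"

text \<open>Zariski closed subsets of V: common zero sets of families of polynomial functions.\<close>
definition zariski_closed :: "('k::comm_ring_1 ^ 'n::finite) set \<Rightarrow> bool" where
  "zariski_closed X \<longleftrightarrow> (\<exists>F \<subseteq> poly_fun. X = {x. \<forall>f\<in>F. f x = 0})"

text \<open>Directional derivative of a polynomial function f at x in direction v:
  the linear coefficient of the univariate polynomial t \<mapsto> f (x + t v)
  (unique, since the field is infinite).\<close>
definition dir_deriv :: "('k::field ^ 'n::finite \<Rightarrow> 'k) \<Rightarrow> 'k ^ 'n \<Rightarrow> 'k ^ 'n \<Rightarrow> 'k" where
  "dir_deriv f x v = coeff (THE p. \<forall>t. poly p t = f (x + t *s v)) 1"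

text \<open>Zariski tangent space T_x X: the common kernel of the differentials at x of all
  polynomial functions vanishing on X.\<close>
definition tangent_space :: "('k::field ^ 'n::finite) set \<Rightarrow> 'k ^ 'n \<Rightarrow> ('k ^ 'n) set" where
  "tangent_space X x =
     {v. \<forall>f \<in> poly_fun. (\<forall>y\<in>X. f y = 0) \<longrightarrow> dir_deriv f x v = 0}"

text \<open>A linear action of a group G (HOL-Algebra) on V.\<close>
definition linear_action :: "('g, 'b) monoid_scheme \<Rightarrow> ('g \<Rightarrow> 'k::field ^ 'n::finite \<Rightarrow> 'k ^ 'n) \<Rightarrow> bool" where
  "linear_action G act \<longleftrightarrow>
     (\<forall>g \<in> carrier G. Vector_Spaces.linear (*s) (*s) (act g)) \<and>
     act \<one>\<^bsub>G\<^esub> = id \<and>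
     (\<forall>g \<in> carrier G. \<forall>h \<in> carrier G. act (g \<otimes>\<^bsub>G\<^esub> h) = act g \<circ> act h)"

text \<open>G-invariant vector fields on V (vector fields identified with polynomial maps V \<rightarrow> V).\<close>
definition invariant_vector_field ::
  "('g, 'b) monoid_scheme \<Rightarrow> ('g \<Rightarrow> 'k::field ^ 'n::finite \<Rightarrow> 'k ^ 'n) \<Rightarrow> ('k ^ 'n \<Rightarrow> 'k ^ 'n) \<Rightarrow> bool" where
  "invariant_vector_field G act \<xi> \<longleftrightarrow>
     poly_map \<xi> \<and> (\<forall>g \<in> carrier G. \<forall>v. \<xi> (act g v) = act g (\<xi> v))"

text \<open>End_G(V): G-equivariant polynomial maps V \<rightarrow> V.\<close>
definition End_G ::
  "('g, 'b) monoid_scheme \<Rightarrow> ('g \<Rightarrow> 'k::field ^ 'n::finite \<Rightarrow> 'k ^ 'n) \<Rightarrow> ('k ^ 'n \<Rightarrow> 'k ^ 'n) set" where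
  "End_G G act = {\<phi>. poly_map \<phi> \<and> (\<forall>g \<in> carrier G. \<forall>v. \<phi> (act g v) = act g (\<phi> v))}"

text \<open>G-symmetric closed subsets.\<close>
definition G_symmetric ::
  "('g, 'b) monoid_scheme \<Rightarrow> ('g \<Rightarrow> 'k::field ^ 'n::finite \<Rightarrow> 'k ^ 'n) \<Rightarrow> ('k ^ 'n) set \<Rightarrow> bool" where
  "G_symmetric G act X \<longleftrightarrow>
     (\<forall>\<xi>. invariant_vector_field G act \<xi> \<longrightarrow> (\<forall>x\<in>X. \<xi> x \<in> tangent_space X x))"

end

theory Submission
  imports Defs
begin


definition pc :: "('k::field_char_0 \<Rightarrow> 'k) \<Rightarrow> 'k poly" where
  "pc h = (THE p. \<forall>t. poly p t = h t)"

definition upoly :: "('k::field_char_0 \<Rightarrow> 'k) \<Rightarrow> bool" where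
  "upoly h \<longleftrightarrow> (\<exists>p. \<forall>t. h t = poly p t)"

lemma pc_eq:
  assumes "\<And>t. poly p t = h t"
  shows "pc h = p"
proof -
  have "\<forall>t. poly p t = h t" using assms by blast
  moreover have "q = p" if "\<forall>t. poly q t = h t" for q
  proof -
    have "\<forall>t. poly (q - p) t = 0" using that assms by simp
    then show ?thesis using poly_all_0_iff_0 by (metis eq_iff_diff_eq_0)
  qed
  ultimately show ?thesis unfolding pc_def by (rule the_equality)
qed

lemma pc_poly: "upoly h \<Longrightarrow> poly (pc h) t = h t"
  unfolding upoly_def using pc_eq by metis

lemma upoly_poly[simp]: "upoly (\<lambda>t. poly p t)"
  unfolding upoly_def by blast

lemma upoly_const[simp]: "upoly (\<lambda>t. c)"
  unfolding upoly_def by (rule exI[of _ "[:c:]"]) simp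

lemma upoly_id[simp]: "upoly (\<lambda>t. t)"
  unfolding upoly_def by (rule exI[of _ "[:0,1:]"]) simp

lemma upoly_add: "upoly f \<Longrightarrow> upoly g \<Longrightarrow> upoly (\<lambda>t. f t + g t)"
  unfolding upoly_def by (metis poly_add)

lemma upoly_mult: "upoly f \<Longrightarrow> upoly g \<Longrightarrow> upoly (\<lambda>t. f t * g t)"
  unfolding upoly_def by (metis poly_mult)

lemma upoly_diff: "upoly f \<Longrightarrow> upoly g \<Longrightarrow> upoly (\<lambda>t. f t - g t)"
  unfolding upoly_def by (metis poly_diff)

lemma pc_add: "upoly f \<Longrightarrow> upoly g \<Longrightarrow> pc (\<lambda>t. f t + g t) = pc f + pc g"
  by (rule pc_eq) (simp add: pc_poly)

lemma pc_mult: "upoly f \<Longrightarrow> upoly g \<Longrightarrow> pc (\<lambda>t. f t * g t) = pc f * pc g"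
  by (rule pc_eq) (simp add: pc_poly)

lemma pc_const: "pc (\<lambda>t. c) = [:c:]"
  by (rule pc_eq) simp

lemma upoly_comp:
  assumes "f \<in> poly_fun" "\<And>i. upoly (\<lambda>t. w t $ i)"
  shows "upoly (\<lambda>t. f (w t))"
  using assms(1)
proof induction
  case (const c) then show ?case by simp
next
  case (coord i) then show ?case using assms(2) by simp
next
  case (add f g) show ?case using add.IH by (rule upoly_add)
next
  case (mult f g) show ?case using mult.IH by (rule upoly_mult)
qed

lemma dd_pc: "dir_deriv f x v = coeff (pc (\<lambda>t. f (x + t *s v))) 1"
  unfolding dir_deriv_def pc_def ..

definition bipoly :: "('k::field_char_0 \<Rightarrow> 'k \<Rightarrow> 'k) \<Rightarrow> bool" where
  "bipoly B \<longleftrightarrow> (\<exists>P::'k poly poly. \<forall>u t. B u t = poly (poly P [:u:]) t)"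

lemma bipoly_const[simp]: "bipoly (\<lambda>u t. c)"
  unfolding bipoly_def by (rule exI[of _ "[:[:c:]:]"]) simp

lemma bipoly_u[simp]: "bipoly (\<lambda>u t. u)"
  unfolding bipoly_def by (rule exI[of _ "[:0,1:]"]) simp

lemma bipoly_t[simp]: "bipoly (\<lambda>u t. t)"
  unfolding bipoly_def by (rule exI[of _ "[:[:0,1:]:]"]) simp

lemma bipoly_add: "bipoly f \<Longrightarrow> bipoly g \<Longrightarrow> bipoly (\<lambda>u t. f u t + g u t)"
  unfolding bipoly_def by (metis poly_add)

lemma bipoly_mult: "bipoly f \<Longrightarrow> bipoly g \<Longrightarrow> bipoly (\<lambda>u t. f u t * g u t)"
  unfolding bipoly_def by (metis poly_mult)

lemma bipoly_comp:
  assumes "f \<in> poly_fun" "\<And>i. bipoly (\<lambda>u t. w u t $ i)"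
  shows "bipoly (\<lambda>u t. f (w u t))"
  using assms(1)
proof induction
  case (const c) then show ?case by simp
next
  case (coord i) then show ?case using assms(2) by simp
next
  case (add f g) show ?case using add.IH by (rule bipoly_add)
next
  case (mult f g) show ?case using mult.IH by (rule bipoly_mult)
qed

lemma poly_poly_u: "poly (poly P [:u:]) t = poly (map_poly (\<lambda>q. poly q t) P) u"
  by (induction P) (auto simp: map_poly_pCons)

lemma coeff_poly_u: "coeff (poly P [:u:]) i = poly (map_poly (\<lambda>q. coeff q i) P) u"
  by (induction P) (auto simp: map_poly_pCons)

lemma swap:
  assumes "bipoly B"
  shows "upoly (\<lambda>t. B u t)" "upoly (\<lambda>u. B u t)"
    "upoly (\<lambda>u. coeff (pc (\<lambda>t. B u t)) i)" "upoly (\<lambda>t. coeff (pc (\<lambda>u. B u t)) j)"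
    "coeff (pc (\<lambda>u. coeff (pc (\<lambda>t. B u t)) i)) j = coeff (pc (\<lambda>t. coeff (pc (\<lambda>u. B u t)) j)) i"
proof -
  obtain P :: "'a poly poly" where P: "\<And>u t. B u t = poly (poly P [:u:]) t"
    using assms unfolding bipoly_def by blast
  have 1: "pc (\<lambda>t. B u t) = poly P [:u:]" for u by (rule pc_eq) (simp add: P)
  have 2: "pc (\<lambda>u. B u t) = map_poly (\<lambda>q. poly q t) P" for t by (rule pc_eq) (simp add: P poly_poly_u)
  have 3: "pc (\<lambda>u. coeff (pc (\<lambda>t. B u t)) i) = map_poly (\<lambda>q. coeff q i) P"
    by (rule pc_eq) (simp add: 1 coeff_poly_u)
  have 4: "pc (\<lambda>t. coeff (pc (\<lambda>u. B u t)) j) = coeff P j"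
    by (rule pc_eq) (simp add: 2 coeff_map_poly)
  show "upoly (\<lambda>t. B u t)"
    unfolding upoly_def by (auto simp: P)
  show "upoly (\<lambda>u. B u t)"
    unfolding upoly_def P poly_poly_u by blast
  show "upoly (\<lambda>u. coeff (pc (\<lambda>t. B u t)) i)"
    unfolding upoly_def 1 coeff_poly_u by blast
  show "upoly (\<lambda>t. coeff (pc (\<lambda>u. B u t)) j)"
    unfolding upoly_def 2 by (auto simp: coeff_map_poly)
  show "coeff (pc (\<lambda>u. coeff (pc (\<lambda>t. B u t)) i)) j = coeff (pc (\<lambda>t. coeff (pc (\<lambda>u. B u t)) j)) i"
    unfolding 3 4 by (simp add: coeff_map_poly)
qed


definition vupoly :: "('k::field_char_0 \<Rightarrow> 'k ^ 'n) \<Rightarrow> bool" where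
  "vupoly w \<longleftrightarrow> (\<forall>i. upoly (\<lambda>u. w u $ i))"

definition vc :: "('k::field_char_0 \<Rightarrow> 'k ^ 'n) \<Rightarrow> nat \<Rightarrow> 'k ^ 'n" where
  "vc w j = (\<chi> i. coeff (pc (\<lambda>u. w u $ i)) j)"

lemma upoly_line_i: "upoly (\<lambda>t. (x + t *s v) $ i)"
proof -
  have "upoly (\<lambda>t. x $ i + t * v $ i)"
    by (intro upoly_add upoly_mult) auto
  then show ?thesis by simp
qed

lemma upoly_line: "f \<in> poly_fun \<Longrightarrow> upoly (\<lambda>t. f (x + t *s v))"
  by (rule upoly_comp[OF _ upoly_line_i])

lemma coeff0_pc: "upoly h \<Longrightarrow> coeff (pc h) 0 = h 0"
  by (simp add: pc_poly flip: poly_0_coeff_0)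

lemma coeff1_mult: "coeff (p * q) (Suc 0) = coeff p 0 * coeff q (Suc 0) + coeff p (Suc 0) * coeff q 0"
  by (simp add: coeff_mult atMost_Suc algebra_simps)

lemma jet:
  assumes "f \<in> poly_fun" "vupoly w" "vupoly w'" "w 0 = w' 0" "vc w 1 = vc w' 1"
  shows "coeff (pc (\<lambda>u. f (w u))) 1 = coeff (pc (\<lambda>u. f (w' u))) 1"
  using assms(1)
proof induction
  case (const c) then show ?case by (simp add: pc_const)
next
  case (coord i)
  have "vc w 1 $ i = vc w' 1 $ i" using assms(5) by simp
  then show ?case by (simp add: vc_def)
next
  case (add f g)
  have u: "upoly (\<lambda>u. f (w u))" "upoly (\<lambda>u. g (w u))" "upoly (\<lambda>u. f (w' u))" "upoly (\<lambda>u. g (w' u))"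
    using add.hyps assms(2,3) unfolding vupoly_def by (auto intro: upoly_comp)
  show ?case using add.IH by (simp add: pc_add u)
next
  case (mult f g)
  have u: "upoly (\<lambda>u. f (w u))" "upoly (\<lambda>u. g (w u))" "upoly (\<lambda>u. f (w' u))" "upoly (\<lambda>u. g (w' u))"
    using mult.hyps assms(2,3) unfolding vupoly_def by (auto intro: upoly_comp)
  show ?case using mult.IH assms(4) by (simp add: pc_mult u coeff1_mult coeff0_pc)
qed

lemma pcompose_shift_coeff1: "coeff (pcompose p [:t, 1:]) (Suc 0) = poly (pderiv p) t"
  by (induction p) (auto simp: pcompose_pCons pderiv_pCons poly_0_coeff_0[symmetric] poly_pcompose algebra_simps)

lemma der:
  assumes "f \<in> poly_fun"
  shows "dir_deriv f (x + t *s b) b = poly (pderiv (pc (\<lambda>s. f (x + s *s b)))) t"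
proof -
  let ?p = "pc (\<lambda>s. f (x + s *s b))"
  have *: "f (x + t *s b + u *s b) = poly ?p (t + u)" for u
  proof -
    have "x + t *s b + u *s b = x + (t+u) *s b" by (simp add: vector_sadd_rdistrib add.assoc)
    then show ?thesis using pc_poly[OF upoly_line[OF assms, of x b], of "t+u"] by (simp add: add.assoc)
  qed
  have "pc (\<lambda>u. f (x + t *s b + u *s b)) = pcompose ?p [:t, 1:]"
    by (intro pc_eq) (simp add: poly_pcompose * )
  then show ?thesis by (simp add: dd_pc pcompose_shift_coeff1)
qed

lemma pf_sum: "finite A \<Longrightarrow> (\<And>a. a \<in> A \<Longrightarrow> f a \<in> poly_fun) \<Longrightarrow> (\<lambda>x. \<Sum>a\<in>A. f a x) \<in> poly_fun"
proof (induction A rule: finite_induct)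
  case empty then show ?case using poly_fun.const[of 0] by simp
next
  case (insert a A) then show ?case by (simp add: poly_fun.add)
qed

lemma pf_coeff:
  assumes "f \<in> poly_fun" "\<And>i. (\<lambda>x. \<alpha> x $ i) \<in> poly_fun" "\<And>i. (\<lambda>x. \<beta> x $ i) \<in> poly_fun"
  shows "(\<lambda>x. coeff (pc (\<lambda>t. f (\<alpha> x + t *s \<beta> x))) k) \<in> poly_fun"
  using assms(1)
proof (induction arbitrary: k)
  case (const c)
  show ?case using poly_fun.const[of c] poly_fun.const[of 0] by (cases k) (auto simp: pc_const)
next
  case (coord i)
  have e: "pc (\<lambda>t. \<alpha> x $ i + t * \<beta> x $ i) = [:\<alpha> x $ i, \<beta> x $ i:]" for x
    by (rule pc_eq) (simp add: algebra_simps)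
  show ?case
  proof (cases k)
    case 0 then show ?thesis using assms(2) by (simp add: e)
  next
    case (Suc m) then show ?thesis using assms(3) poly_fun.const[of 0]
      by (cases m) (auto simp: e)
  qed
next
  case (add f g)
  have "(\<lambda>x. coeff (pc (\<lambda>t. f (\<alpha> x + t *s \<beta> x))) k + coeff (pc (\<lambda>t. g (\<alpha> x + t *s \<beta> x))) k) \<in> poly_fun"
    using add.IH by (rule poly_fun.add)
  then show ?case using add.hyps by (simp add: pc_add upoly_line)
next
  case (mult f g)
  have "(\<lambda>x. \<Sum>i\<le>k. coeff (pc (\<lambda>t. f (\<alpha> x + t *s \<beta> x))) i * coeff (pc (\<lambda>t. g (\<alpha> x + t *s \<beta> x))) (k - i)) \<in> poly_fun"
    by (rule pf_sum) (auto intro: poly_fun.mult mult.IH)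
  then show ?case using mult.hyps by (simp add: pc_mult upoly_line coeff_mult)
qed


lemma dd_const: "dir_deriv (\<lambda>y. c) (x::'k::field_char_0^'n) v = 0"
  by (simp add: dd_pc pc_const)

lemma dd_coord: "dir_deriv (\<lambda>y. y $ i) (x::'k::field_char_0^'n) v = v $ i"
proof -
  have "pc (\<lambda>t. x $ i + t * v $ i) = [:x $ i, v $ i:]" by (rule pc_eq) (simp add: algebra_simps)
  then show ?thesis by (simp add: dd_pc)
qed

lemma dd_add: "f \<in> poly_fun \<Longrightarrow> g \<in> poly_fun \<Longrightarrow>
  dir_deriv (\<lambda>y. f y + g y) (x::'k::field_char_0^'n) v = dir_deriv f x v + dir_deriv g x v"
  by (simp add: dd_pc pc_add upoly_line)

lemma dd_mult: "f \<in> poly_fun \<Longrightarrow> g \<in> poly_fun \<Longrightarrow>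
  dir_deriv (\<lambda>y. f y * g y) (x::'k::field_char_0^'n) v = f x * dir_deriv g x v + dir_deriv f x v * g x"
  by (simp add: dd_pc pc_mult upoly_line coeff1_mult coeff0_pc)

lemma dd_dir_add: "f \<in> poly_fun \<Longrightarrow> dir_deriv f (x::'k::field_char_0^'n) (v + w) = dir_deriv f x v + dir_deriv f x w"
proof (induction rule: poly_fun.induct)
  case (const c) then show ?case by (simp add: dd_const)
next
  case (coord i) then show ?case by (simp add: dd_coord)
next
  case (add f g) then show ?case by (simp add: dd_add)
next
  case (mult f g) then show ?case by (simp add: dd_mult algebra_simps)
qed

lemma bipoly_lin: "bipoly (\<lambda>u t. (x + u *s b) $ j)"
proof -
  have "bipoly (\<lambda>u t. x $ j + u * b $ j)" by (intro bipoly_add bipoly_mult) auto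
  then show ?thesis by simp
qed

definition zeta :: "('k::field_char_0 ^ 'n \<Rightarrow> 'k ^ 'n) \<Rightarrow> 'k ^ 'n \<Rightarrow> 'k ^ 'n" where
  "zeta \<eta> x = (\<chi> i. dir_deriv (\<lambda>y. \<eta> y $ i) x (\<eta> x))"

lemma key:
  assumes f: "f \<in> poly_fun" and eta: "\<And>i. (\<lambda>y. \<eta> y $ i) \<in> poly_fun"
  shows "dir_deriv (\<lambda>y. coeff (pc (\<lambda>t. f (y + t *s \<eta> y))) k) x (\<eta> x)
    = of_nat (Suc k) * coeff (pc (\<lambda>t. f (x + t *s \<eta> x))) (Suc k)
      + coeff (pc (\<lambda>v. coeff (pc (\<lambda>t. f (x + t *s (\<eta> x + v *s zeta \<eta> x)))) k)) 1"
proof -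
  define b where "b = \<eta> x"
  define z where "z = zeta \<eta> x"
  define W where "W = (\<lambda>u t. (x + u *s b) + t *s \<eta> (x + u *s b))"
  define B where "B = (\<lambda>u t. f (W u t))"
  define B' where "B' = (\<lambda>v t. f (x + t *s (b + v *s z)))"
  have etab: "bipoly (\<lambda>u t. \<eta> (x + u *s b) $ i)" for i
    by (rule bipoly_comp[OF eta bipoly_lin])
  have Wb: "bipoly (\<lambda>u t. W u t $ i)" for i
  proof -
    have "bipoly (\<lambda>u t. (x + u *s b) $ i + t * \<eta> (x + u *s b) $ i)"
      by (intro bipoly_add bipoly_mult bipoly_lin etab) auto
    then show ?thesis by (simp add: W_def)
  qed
  have Bb: "bipoly B" unfolding B_def by (rule bipoly_comp[OF f Wb])
  have B'b: "bipoly B'"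
  proof -
    have "bipoly (\<lambda>v t. (x + t *s (b + v *s z)) $ i)" for i
    proof -
      have "bipoly (\<lambda>v t. x $ i + t * (b $ i + v * z $ i))"
        by (intro bipoly_add bipoly_mult) auto
      moreover have "(\<lambda>v t. (x + t *s (b + v *s z)) $ i) = (\<lambda>v t. x $ i + t * (b $ i + v * z $ i))"
        by (simp add: algebra_simps)
      ultimately show ?thesis by simp
    qed
    then show ?thesis unfolding B'_def by (rule bipoly_comp[OF f])
  qed
  have LHS: "dir_deriv (\<lambda>y. coeff (pc (\<lambda>t. f (y + t *s \<eta> y))) k) x (\<eta> x)
      = coeff (pc (\<lambda>t. coeff (pc (\<lambda>u. B u t)) 1)) k"
    using swap(5)[OF Bb, of k 1] by (simp add: dd_pc B_def W_def b_def)
  have inner: "coeff (pc (\<lambda>u. B u t)) 1 = dir_deriv f (x + t *s b) (b + t *s z)" for t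
  proof -
    have "coeff (pc (\<lambda>u. f (W u t))) 1 = coeff (pc (\<lambda>u. f ((x + t *s b) + u *s (b + t *s z)))) 1"
    proof (rule jet[OF f])
      show "vupoly (\<lambda>u. W u t)" unfolding vupoly_def using swap(2)[OF Wb] by blast
      show "vupoly (\<lambda>u. x + t *s b + u *s (b + t *s z))" unfolding vupoly_def
        using upoly_line_i by blast
      show "W 0 t = x + t *s b + 0 *s (b + t *s z)" by (simp add: W_def b_def)
      show "vc (\<lambda>u. W u t) 1 = vc (\<lambda>u. x + t *s b + u *s (b + t *s z)) 1"
      proof -
        have "pc (\<lambda>u. W u t $ i) = [:x $ i, b $ i:] + smult t (pc (\<lambda>u. \<eta> (x + u *s b) $ i))" for i
          using pc_poly[OF upoly_line[OF eta, of x b]]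
          by (intro pc_eq) (simp add: W_def algebra_simps)
        moreover have "pc (\<lambda>u. (x + t *s b + u *s (b + t *s z)) $ i)
             = [:x $ i + t * b $ i, b $ i + t * z $ i:]" for i
          by (intro pc_eq) (simp add: algebra_simps)
        moreover have "coeff (pc (\<lambda>u. \<eta> (x + u *s b) $ i)) 1 = z $ i" for i
          by (simp add: z_def zeta_def dd_pc b_def)
        ultimately show ?thesis unfolding vc_def by (intro vec_eq_iff[THEN iffD2]) simp
      qed
    qed
    then show ?thesis by (simp add: B_def dd_pc)
  qed
  define p where "p = pc (\<lambda>s. f (x + s *s b))"
  define h2 where "h2 = (\<lambda>t. dir_deriv f (x + t *s b) (t *s z))"
  have h2': "h2 t = coeff (pc (\<lambda>v. B' v t)) 1" for t
  proof -
    have "(\<lambda>v. B' v t) = (\<lambda>v. f ((x + t *s b) + v *s (t *s z)))"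
      by (simp add: B'_def algebra_simps vector_smult_assoc mult.commute)
    then show ?thesis by (simp add: h2_def dd_pc)
  qed
  have uh2: "upoly h2" unfolding h2' using swap(4)[OF B'b] .
  have h1: "dir_deriv f (x + t *s b) b = poly (pderiv p) t" for t
    unfolding p_def by (rule der[OF f])
  have "coeff (pc (\<lambda>t. coeff (pc (\<lambda>u. B u t)) 1)) k = coeff (pc (\<lambda>t. poly (pderiv p) t + h2 t)) k"
  proof -
    have "(\<lambda>t. coeff (pc (\<lambda>u. B u t)) 1) = (\<lambda>t. poly (pderiv p) t + h2 t)"
      by (rule ext) (simp only: inner dd_dir_add[OF f] h1 h2_def)
    then show ?thesis by (simp only:)
  qed
  also have "\<dots> = coeff (pderiv p) k + coeff (pc h2) k"
    using pc_add[OF upoly_poly uh2] pc_eq[of "pderiv p" "\<lambda>t. poly (pderiv p) t"] by simp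
  also have "coeff (pc h2) k = coeff (pc (\<lambda>v. coeff (pc (\<lambda>t. B' v t)) k)) 1"
    unfolding h2' using swap(5)[OF B'b, of k 1] by simp
  finally show ?thesis unfolding LHS by (simp add: coeff_pderiv p_def B'_def b_def z_def)
qed



lemma lin_add: "Vector_Spaces.linear (*s) (*s) (A :: 'k::field ^'n \<Rightarrow> 'k ^ 'n) \<Longrightarrow> A (a + b) = A a + A b"
  unfolding Vector_Spaces.linear_iff by blast

lemma lin_scale: "Vector_Spaces.linear (*s) (*s) (A :: 'k::field ^'n \<Rightarrow> 'k ^ 'n) \<Longrightarrow> A (c *s a) = c *s A a"
  unfolding Vector_Spaces.linear_iff by blast

lemma lin_diff:
  assumes "Vector_Spaces.linear (*s) (*s) (A :: 'k::field ^'n \<Rightarrow> 'k ^ 'n)" shows "A (a - b) = A a - A b"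
proof -
  have "A (a - b) + A b = A a" using lin_add[OF assms, of "a - b" b] by simp
  then show ?thesis by (simp add: algebra_simps)
qed

lemma lin_sum:
  assumes "Vector_Spaces.linear (*s) (*s) (A :: 'k::field ^'n \<Rightarrow> 'k ^ 'n)"
  shows "finite S \<Longrightarrow> A (\<Sum>j\<in>S. f j) = (\<Sum>j\<in>S. A (f j))"
proof (induction S rule: finite_induct)
  case empty
  have "A 0 = A 0 + A 0" using lin_add[OF assms, of 0 0] by simp
  then show ?case by simp
next
  case (insert a S) then show ?case by (simp add: lin_add[OF assms])
qed

lemma lin_comp:
  assumes "Vector_Spaces.linear (*s) (*s) (A :: 'k::field ^'n::finite \<Rightarrow> 'k ^ 'n)"
  shows "A y $ i = (\<Sum>j\<in>UNIV. y $ j * A (axis j 1) $ i)"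
proof -
  have "A y = A (\<Sum>j\<in>UNIV. y $ j *s axis j 1)" by (simp add: basis_expansion)
  also have "\<dots> = (\<Sum>j\<in>UNIV. y $ j *s A (axis j 1))"
    by (simp add: lin_sum[OF assms] lin_scale[OF assms])
  finally show ?thesis by (simp add: sum_component)
qed

lemma zeta_pf:
  assumes "\<And>i. (\<lambda>y. \<eta> y $ i) \<in> poly_fun"
  shows "(\<lambda>x. zeta \<eta> x $ i) \<in> poly_fun"
proof -
  have "(\<lambda>x. coeff (pc (\<lambda>t. (\<lambda>y. \<eta> y $ i) (x + t *s \<eta> x))) 1) \<in> poly_fun"
    by (rule pf_coeff[OF assms poly_fun.coord assms])
  then show ?thesis by (simp add: zeta_def dd_pc)
qed


lemma zeta_equiv:
  assumes eta: "\<And>i. (\<lambda>y. \<eta> y $ i) \<in> poly_fun"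
    and lin: "Vector_Spaces.linear (*s) (*s) (A :: 'k::field_char_0 ^'n::finite \<Rightarrow> 'k ^ 'n)"
    and eq: "\<And>v. \<eta> (A v) = A (\<eta> v)"
  shows "zeta \<eta> (A x) = A (zeta \<eta> x)"
proof (rule vec_eq_iff[THEN iffD2], rule allI)
  fix i
  define m where "m j = A (axis j 1) $ i" for j
  have "zeta \<eta> (A x) $ i = coeff (pc (\<lambda>u. \<eta> (A x + u *s A (\<eta> x)) $ i)) 1"
  proof -
    have "zeta \<eta> (A x) $ i = dir_deriv (\<lambda>y. \<eta> y $ i) (A x) (\<eta> (A x))"
      by (simp only: zeta_def vec_lambda_beta)
    also have "\<dots> = coeff (pc (\<lambda>u. \<eta> (A x + u *s A (\<eta> x)) $ i)) 1"
      by (simp only: dd_pc eq)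
    finally show ?thesis .
  qed
  also have "(\<lambda>u. \<eta> (A x + u *s A (\<eta> x)) $ i) = (\<lambda>u. \<Sum>j\<in>UNIV. \<eta> (x + u *s \<eta> x) $ j * m j)"
  proof (rule ext)
    fix u
    have "A x + u *s A (\<eta> x) = A (x + u *s \<eta> x)" by (simp add: lin_add[OF lin] lin_scale[OF lin])
    then have "\<eta> (A x + u *s A (\<eta> x)) = A (\<eta> (x + u *s \<eta> x))" by (simp add: eq)
    then show "\<eta> (A x + u *s A (\<eta> x)) $ i = (\<Sum>j\<in>UNIV. \<eta> (x + u *s \<eta> x) $ j * m j)"
      using lin_comp[OF lin, of "\<eta> (x + u *s \<eta> x)" i] unfolding m_def by simp
  qed
  also have "pc \<dots> = (\<Sum>j\<in>UNIV. smult (m j) (pc (\<lambda>u. \<eta> (x + u *s \<eta> x) $ j)))"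
    by (rule pc_eq) (simp add: poly_sum pc_poly[OF upoly_line[OF eta]] mult.commute)
  also have "coeff \<dots> 1 = (\<Sum>j\<in>UNIV. zeta \<eta> x $ j * m j)"
    by (simp add: coeff_sum zeta_def dd_pc mult.commute)
  also have "\<dots> = A (zeta \<eta> x) $ i" unfolding m_def by (rule lin_comp[OF lin, symmetric])
  finally show "zeta \<eta> (A x) $ i = A (zeta \<eta> x) $ i" .
qed



lemma pf_minus_one: "f \<in> poly_fun \<Longrightarrow> g \<in> poly_fun \<Longrightarrow> (\<lambda>x. f x - g x) \<in> poly_fun"
proof -
  assume "f \<in> poly_fun" "g \<in> poly_fun"
  then have "(\<lambda>x. f x + (\<lambda>x. -1) x * g x) \<in> poly_fun"
    by (intro poly_fun.add poly_fun.mult poly_fun.const)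
  then show ?thesis by simp
qed

theorem theorem4p2p2:
  fixes G :: "('g, 'b) monoid_scheme"
    and act :: "'g \<Rightarrow> 'k::{alg_closed_field, field_char_0} ^ 'n::finite \<Rightarrow> 'k ^ 'n"
    and X :: "('k ^ 'n) set"
  assumes "group G"
    and "linear_action G act"
    and "zariski_closed X"
  shows "G_symmetric G act X \<longleftrightarrow> (\<forall>\<phi> \<in> End_G G act. \<phi> ` X \<subseteq> X)"
proof -
  have lin: "\<And>g. g \<in> carrier G \<Longrightarrow> Vector_Spaces.linear (*s) (*s) (act g)"
    using assms(2) unfolding linear_action_def by blast
  obtain F where F: "F \<subseteq> poly_fun" "X = {x. \<forall>f\<in>F. f x = 0}"
    using assms(3) unfolding zariski_closed_def by blast
  have ivf: "invariant_vector_field G act \<xi> \<longleftrightarrow> \<xi> \<in> End_G G act" for \<xi>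
    unfolding invariant_vector_field_def End_G_def by simp
  have line_End: "(\<lambda>y. y + t *s \<xi> y) \<in> End_G G act" if "\<xi> \<in> End_G G act" for \<xi> t
  proof -
    have pm: "poly_map \<xi>" and eq: "\<And>g v. g \<in> carrier G \<Longrightarrow> \<xi> (act g v) = act g (\<xi> v)"
      using that unfolding End_G_def by auto
    have "(\<lambda>y. y $ i + (\<lambda>y. t) y * \<xi> y $ i) \<in> poly_fun" for i
      using pm unfolding poly_map_def
      by (intro poly_fun.add poly_fun.mult poly_fun.const poly_fun.coord) auto
    then have "poly_map (\<lambda>y. y + t *s \<xi> y)" unfolding poly_map_def by simp
    moreover have "act g v + t *s \<xi> (act g v) = act g (v + t *s \<xi> v)" if "g \<in> carrier G" for g v
      using lin[OF that] eq[OF that] by (simp add: lin_add lin_scale)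
    ultimately show ?thesis unfolding End_G_def by simp
  qed
  show ?thesis
  proof
    assume sym: "G_symmetric G act X"
    define J where "J = {f \<in> poly_fun. \<forall>y\<in>X. f y = 0}"
    have claim: "\<forall>f \<eta>. f \<in> J \<longrightarrow> \<eta> \<in> End_G G act \<longrightarrow> (\<lambda>x. coeff (pc (\<lambda>t. f (x + t *s \<eta> x))) k) \<in> J" for k
    proof (induction k)
      case 0
      show ?case
      proof (intro allI impI)
        fix f \<eta> assume f: "f \<in> J" and e: "\<eta> \<in> End_G G act"
        have "coeff (pc (\<lambda>t. f (x + t *s \<eta> x))) 0 = f x" for x
          using f unfolding J_def by (simp add: coeff0_pc upoly_line)
        then show "(\<lambda>x. coeff (pc (\<lambda>t. f (x + t *s \<eta> x))) 0) \<in> J" using f by simp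
      qed
    next
      case (Suc k)
      show ?case
      proof (intro allI impI)
        fix f \<eta> assume f: "f \<in> J" and e: "\<eta> \<in> End_G G act"
        have fp: "f \<in> poly_fun" using f unfolding J_def by simp
        have ep: "\<And>i. (\<lambda>y. \<eta> y $ i) \<in> poly_fun" and eq: "\<And>g v. g \<in> carrier G \<Longrightarrow> \<eta> (act g v) = act g (\<eta> v)"
          using e unfolding End_G_def poly_map_def by auto
        have pf: "(\<lambda>x. coeff (pc (\<lambda>t. f (x + t *s \<eta> x))) (Suc k)) \<in> poly_fun"
          by (rule pf_coeff[OF fp poly_fun.coord ep])
        have ev: "(\<lambda>y. \<eta> y + v *s zeta \<eta> y) \<in> End_G G act" for v
        proof -
          have "(\<lambda>y. \<eta> y $ i + (\<lambda>y. v) y * zeta \<eta> y $ i) \<in> poly_fun" for i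
            by (intro poly_fun.add poly_fun.mult poly_fun.const ep zeta_pf)
          then have "poly_map (\<lambda>y. \<eta> y + v *s zeta \<eta> y)" unfolding poly_map_def by simp
          moreover have "\<eta> (act g w) + v *s zeta \<eta> (act g w) = act g (\<eta> w + v *s zeta \<eta> w)"
            if "g \<in> carrier G" for g w
            using lin[OF that] eq[OF that] zeta_equiv[OF ep lin[OF that] eq[OF that]]
            by (simp add: lin_add lin_scale)
          ultimately show ?thesis unfolding End_G_def by simp
        qed
        have "coeff (pc (\<lambda>t. f (x + t *s \<eta> x))) (Suc k) = 0" if x: "x \<in> X" for x
        proof -
          define g where "g = (\<lambda>x. coeff (pc (\<lambda>t. f (x + t *s \<eta> x))) k)"
          have gJ: "g \<in> J" unfolding g_def using Suc.IH[rule_format, OF f e] .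
          have "\<eta> x \<in> tangent_space X x"
          proof -
            have "invariant_vector_field G act \<eta>" using e ivf by blast
            then show ?thesis using sym x unfolding G_symmetric_def by blast
          qed
          then have d0: "dir_deriv g x (\<eta> x) = 0"
            using gJ unfolding tangent_space_def J_def by blast
          have "coeff (pc (\<lambda>t. f (x + t *s (\<eta> x + v *s zeta \<eta> x)))) k = 0" for v
            using Suc.IH[rule_format, OF f ev[of v]] x unfolding J_def by blast
          then have "(\<lambda>v. coeff (pc (\<lambda>t. f (x + t *s (\<eta> x + v *s zeta \<eta> x)))) k) = (\<lambda>v. 0)"
            by (rule ext)
          then have q3: "coeff (pc (\<lambda>v. coeff (pc (\<lambda>t. f (x + t *s (\<eta> x + v *s zeta \<eta> x)))) k)) 1 = 0"
            by (simp add: pc_const)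
          have "of_nat (Suc k) * coeff (pc (\<lambda>t. f (x + t *s \<eta> x))) (Suc k) = 0"
            using key[OF fp ep, of k x] d0 q3 unfolding g_def by simp
          then show ?thesis by (simp del: of_nat_Suc)
        qed
        then show "(\<lambda>x. coeff (pc (\<lambda>t. f (x + t *s \<eta> x))) (Suc k)) \<in> J"
          using pf unfolding J_def by blast
      qed
    qed
    show "\<forall>\<phi> \<in> End_G G act. \<phi> ` X \<subseteq> X"
    proof (intro ballI subsetI)
      fix \<phi> y assume phi: "\<phi> \<in> End_G G act" and "y \<in> \<phi> ` X"
      then obtain x where x: "x \<in> X" and y: "y = \<phi> x" by blast
      have pm: "poly_map \<phi>" and eq: "\<And>g v. g \<in> carrier G \<Longrightarrow> \<phi> (act g v) = act g (\<phi> v)"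
        using phi unfolding End_G_def by auto
      define \<eta> where "\<eta> = (\<lambda>y. \<phi> y - y)"
      have e: "\<eta> \<in> End_G G act"
      proof -
        have "(\<lambda>y. \<phi> y $ i - y $ i) \<in> poly_fun" for i
          using pm unfolding poly_map_def by (intro pf_minus_one poly_fun.coord) auto
        then have "poly_map \<eta>" unfolding poly_map_def \<eta>_def by simp
        moreover have "\<phi> (act g v) - act g v = act g (\<phi> v - v)" if "g \<in> carrier G" for g v
          using lin[OF that] eq[OF that] by (simp add: lin_diff)
        ultimately show ?thesis unfolding End_G_def \<eta>_def by simp
      qed
      have "f y = 0" if fF: "f \<in> F" for f
      proof -
        have fJ: "f \<in> J" using fF F unfolding J_def by auto
        have fp: "f \<in> poly_fun" using fF F by auto
        define p where "p = pc (\<lambda>t. f (x + t *s \<eta> x))"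
        have "f y = f (x + 1 *s \<eta> x)" by (simp add: y \<eta>_def)
        also have "\<dots> = poly p 1" unfolding p_def by (simp add: pc_poly upoly_line[OF fp])
        also have "\<dots> = (\<Sum>i\<le>degree p. coeff p i * 1 ^ i)" by (rule poly_altdef)
        also have "\<dots> = 0"
        proof -
          have "coeff p i = 0" for i
          proof -
            have "(\<lambda>x. coeff (pc (\<lambda>t. f (x + t *s \<eta> x))) i) \<in> J"
              using claim[of i] fJ e by blast
            then show ?thesis using x unfolding J_def p_def by blast
          qed
          then show ?thesis by simp
        qed
        finally show ?thesis .
      qed
      then show "y \<in> X" using F by auto
    qed
  next
    assume st: "\<forall>\<phi> \<in> End_G G act. \<phi> ` X \<subseteq> X"
    show "G_symmetric G act X"
      unfolding G_symmetric_def
    proof (intro allI impI ballI)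
      fix \<xi> x assume xi: "invariant_vector_field G act \<xi>" and x: "x \<in> X"
      have xiE: "\<xi> \<in> End_G G act" using xi ivf by blast
      have inX: "x + t *s \<xi> x \<in> X" for t
      proof -
        have "(\<lambda>y. y + t *s \<xi> y) ` X \<subseteq> X" using bspec[OF st line_End[OF xiE]] .
        then show ?thesis using x unfolding image_subset_iff by blast
      qed
      show "\<xi> x \<in> tangent_space X x"
        unfolding tangent_space_def
      proof (intro CollectI ballI impI)
        fix f assume "f \<in> poly_fun" and van: "\<forall>y\<in>X. f y = 0"
        then have "(\<lambda>t. f (x + t *s \<xi> x)) = (\<lambda>t. 0)" using inX by auto
        then show "dir_deriv f x (\<xi> x) = 0" by (simp add: dd_pc pc_const)
      qed
    qed
  qed
qed


end
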